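(* Let $C\subseteq B_k^n$. Then $C$ is a linear code over $B_k$ (i.e. a $B_k$-submodule of $B_k^n$) if and only if there exist linear codes $C_1,\dots,C_{2^k}$ of length $n$ over $\mathbb{F}_{p^r}$ (i.e. $\mathbb{F}_{p^r}$-subspaces of $\mathbb{F}_{p^r}^n$) such that $C=\overline{\Psi}_k^{-1}(C_1,\dots,C_{2^k})$.
   Context: Let $p$ be a prime, $r\ge 1$, $\mathbb{F}_{p^r}$ the field with $p^r$ elements, and for $k\ge1$ let $B_k=\mathbb{F}_{p^r}[v_1,\dots,v_k]/\langle v_i^2-v_i,\ v_iv_j-v_jv_i\rangle$. For $H\subseteq\{1,\dots,k\}$ put $v_H=\prod_{i\in H}v_i$ ($v_\emptyset=1$); every $a\in B_k$ can be written uniquely as $a=\sum_{H\subseteq\{1,\dots,k\}}\alpha_Hv_H$ with $\alpha_H\in\mathbb{F}_{p^r}$. Fix an enumeration $H_1,\dots,H_{2^k}$ of the subsets of $\{1,\dots,k\}$ and define $\Psi_k:B_k\to\mathbb{F}_{p^r}^{2^k}$ by $\Psi_k(a)=\big(\sum_{H\subseteq H_1}\alpha_H,\ \sum_{H\subseteq H_2}\alpha_H,\dots,\sum_{H\subseteq H_{2^k}}\alpha_H\big)$ (a bijection). For $\mathbf a=(a_1,\dots,a_n)\in B_k^n$ let $\overline{\Psi}_k(\mathbf a)=(\Psi_k(a_1),\dots,\Psi_k(a_n))$. For subsets $C_1,\dots,C_{2^k}\subseteq\mathbb{F}_{p^r}^n$, $\overline{\Psi}_k^{-1}(C_1,\dots,C_{2^k})$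 denotes the set of all $\mathbf a=(a_1,\dots,a_n)\in B_k^n$ such that for every $j\in\{1,\dots,2^k\}$ the vector $\big(\Psi_k(a_1)_j,\dots,\Psi_k(a_n)_j\big)$ of $j$-th components lies in $C_j$. *)

theory Defs
  imports Main "HOL-Computational_Algebra.Primes"
begin

text \<open>Elements of B_k = F[v_1..v_k]/<v_i^2 - v_i, v_i v_j - v_j v_i> are represented by their
  unique coefficient families (alpha_H), H ranging over subsets of {1..k}; coefficients
  outside Pow {1..k} are zero.\<close>

definition Bk :: "nat \<Rightarrow> (nat set \<Rightarrow> 'a::field) set" where
  "Bk k = {a. \<forall>H. \<not> H \<subseteq> {1..k} \<longrightarrow> a H = 0}"

text \<open>Multiplication in B_k: v_H * v_K = v_(H union K).\<close>
definition bmul :: "nat \<Rightarrow> (nat set \<Rightarrow> 'a::field) \<Rightarrow> (nat set \<Rightarrow> 'a) \<Rightarrow> (nat set \<Rightarrow> 'a)" where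
  "bmul k a b = (\<lambda>G. \<Sum>HK\<in>{(H, K). H \<subseteq> {1..k} \<and> K \<subseteq> {1..k} \<and> H \<union> K = G}.
                        a (fst HK) * b (snd HK))"

definition Bvec :: "nat \<Rightarrow> nat \<Rightarrow> (nat \<Rightarrow> nat set \<Rightarrow> 'a::field) set" where
  "Bvec k n = {x. (\<forall>i<n. x i \<in> Bk k) \<and> (\<forall>i\<ge>n. x i = (\<lambda>_. 0))}"

definition B_linear_code :: "nat \<Rightarrow> nat \<Rightarrow> (nat \<Rightarrow> nat set \<Rightarrow> 'a::field) set \<Rightarrow> bool" where
  "B_linear_code k n C \<longleftrightarrow>
     C \<subseteq> Bvec k n \<and> (\<lambda>_ _. 0) \<in> C \<and>
     (\<forall>x\<in>C. \<forall>y\<in>C. (\<lambda>i H. x i H + y i H) \<in> C) \<and>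
     (\<forall>a\<in>Bk k. \<forall>x\<in>C. (\<lambda>i. if i < n then bmul k a (x i) else (\<lambda>_. 0)) \<in> C)"

definition Fvec :: "nat \<Rightarrow> (nat \<Rightarrow> 'a::field) set" where
  "Fvec n = {x. \<forall>i\<ge>n. x i = 0}"

definition F_linear_code :: "nat \<Rightarrow> (nat \<Rightarrow> 'a::field) set \<Rightarrow> bool" where
  "F_linear_code n D \<longleftrightarrow>
     D \<subseteq> Fvec n \<and> (\<lambda>_. 0) \<in> D \<and>
     (\<forall>x\<in>D. \<forall>y\<in>D. (\<lambda>i. x i + y i) \<in> D) \<and>
     (\<forall>c. \<forall>x\<in>D. (\<lambda>i. c * x i) \<in> D)"

definition Psi :: "(nat \<Rightarrow> nat set) \<Rightarrow> (nat set \<Rightarrow> 'a::field) \<Rightarrow> nat \<Rightarrow> 'a" where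
  "Psi enum a j = (\<Sum>H\<in>Pow (enum j). a H)"

definition Psibar_inv :: "nat \<Rightarrow> (nat \<Rightarrow> nat set) \<Rightarrow> nat \<Rightarrow> (nat \<Rightarrow> (nat \<Rightarrow> 'a::field) set)
      \<Rightarrow> (nat \<Rightarrow> nat set \<Rightarrow> 'a) set" where
  "Psibar_inv k enum n Cs =
     {x \<in> Bvec k n. \<forall>j\<in>{1..2^k}. (\<lambda>i. if i < n then Psi enum (x i) j else 0) \<in> Cs j}"

end

theory Submission
  imports Defs
begin

definition Q :: "(nat set \<Rightarrow> 'a::field) \<Rightarrow> nat set \<Rightarrow> 'a" where
  "Q a T = (\<Sum>H\<in>Pow T. a H)"

lemma Psi_eq: "Psi enum a j = Q a (enum j)"
  by (simp add: Psi_def Q_def)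

lemma Q_add: "Q (\<lambda>H. a H + b H) T = Q a T + Q b T"
  by (simp add: Q_def sum.distrib)

lemma Q_zero: "Q (\<lambda>_. 0) T = 0"
  by (simp add: Q_def)

lemma Q_zero': "(\<And>H. a H = 0) \<Longrightarrow> Q a T = 0"
  by (simp add: Q_def)

lemma Q_sum: "Q (\<lambda>H. \<Sum>j\<in>J. f j H) T = (\<Sum>j\<in>J. Q (f j) T)"
  unfolding Q_def by (rule sum.swap)

lemma Q_mul:
  assumes T: "T \<subseteq> {1..k}"
  shows "Q (bmul k a b) T = Q a T * Q b T"
proof -
  have fT: "finite T" using T finite_subset by blast
  have "Q (bmul k a b) T = (\<Sum>G\<in>Pow T. \<Sum>HK\<in>{x. x \<in> Pow T \<times> Pow T \<and> (\<lambda>(H,K). H \<union> K) x = G}.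
                        a (fst HK) * b (snd HK))"
    unfolding Q_def bmul_def
  proof (rule sum.cong[OF refl])
    fix G assume G: "G \<in> Pow T"
    have "{(H, K). H \<subseteq> {1..k} \<and> K \<subseteq> {1..k} \<and> H \<union> K = G} =
          {x. x \<in> Pow T \<times> Pow T \<and> (\<lambda>(H,K). H \<union> K) x = G}"
      using G T by auto
    then show "(\<Sum>HK\<in>{(H, K). H \<subseteq> {1..k} \<and> K \<subseteq> {1..k} \<and> H \<union> K = G}. a (fst HK) * b (snd HK)) =
          (\<Sum>HK\<in>{x. x \<in> Pow T \<times> Pow T \<and> (\<lambda>(H,K). H \<union> K) x = G}. a (fst HK) * b (snd HK))"
      by simp
  qed
  also have "\<dots> = (\<Sum>HK\<in>Pow T \<times> Pow T. a (fst HK) * b (snd HK))"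
    by (rule sum.group) (use fT in auto)
  also have "\<dots> = (\<Sum>H\<in>Pow T. \<Sum>K\<in>Pow T. a H * b K)"
    by (simp add: sum.cartesian_product case_prod_beta)
  also have "\<dots> = Q a T * Q b T"
    by (simp add: Q_def sum_product)
  finally show ?thesis .
qed

lemma bmul_Bk: "bmul k a b \<in> Bk k"
  unfolding Bk_def bmul_def
proof (intro CollectI allI impI)
  fix G assume "\<not> G \<subseteq> {1..k}"
  then have E: "{(H, K). H \<subseteq> {1..k} \<and> K \<subseteq> {1..k} \<and> H \<union> K = G} = {}" by auto
  show "(\<Sum>HK\<in>{(H, K). H \<subseteq> {1..k} \<and> K \<subseteq> {1..k} \<and> H \<union> K = G}. a (fst HK) * b (snd HK)) = 0"
    by (simp only: E sum.empty)
qed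

lemma Q_inj:
  assumes a: "a \<in> Bk k" and b: "b \<in> Bk k" and eq: "\<forall>T\<subseteq>{1..k}. Q a T = Q b T"
  shows "a = b"
proof (rule ext)
  fix S
  define d where "d = (\<lambda>H. a H - b H)"
  have Qd: "Q d T = Q a T - Q b T" for T by (simp add: Q_def d_def sum_subtractf)
  show "a S = b S"
  proof (cases "S \<subseteq> {1..k}")
    case True
    have fS: "finite S" using True finite_subset by blast
    have "d S = (\<Sum>T\<in>Pow S. (-1) ^ (card S - card T) * Q d T)"
      by (rule inclusion_exclusion_mobius) (simp_all add: Q_def fS)
    also have "\<dots> = 0"
      using True eq by (intro sum.neutral) (auto simp: Qd)
    finally show ?thesis by (simp add: d_def)
  next
    case False
    then show ?thesis using a b by (simp add: Bk_def)
  qed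
qed

lemma Q_surj:
  fixes f :: "nat set \<Rightarrow> 'a::field"
  shows "\<exists>a\<in>Bk k. \<forall>T\<subseteq>{1..k}. Q a T = f T"
proof -
  define G where "G S = (\<Sum>T\<in>Pow S. (-1) ^ card T * f T)" for S
  define a where "a H = (if H \<subseteq> {1..k} then (-1) ^ card H * G H else 0)" for H
  have "a \<in> Bk k" by (simp add: Bk_def a_def)
  moreover have "Q a T = f T" if T: "T \<subseteq> {1..k}" for T
  proof -
    have fT: "finite T" using T finite_subset by blast
    have "f T = (\<Sum>U\<in>Pow T. (-1) ^ card U * G U)"
      by (rule inclusion_exclusion_symmetric) (simp_all add: G_def fT)
    also have "\<dots> = Q a T"
      unfolding Q_def using T by (intro sum.cong) (auto simp: a_def)
    finally show ?thesis by simp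
  qed
  ultimately show ?thesis by blast
qed

lemma const_Bk: "(\<lambda>H. if H = {} then c else 0) \<in> Bk k"
  by (simp add: Bk_def)

lemma Q_const: assumes fT: "finite T" shows "Q (\<lambda>H. if H = {} then c else 0) T = c"
proof -
  have "Q (\<lambda>H. if H = {} then c else 0) T = (\<Sum>H\<in>Pow T. if H = {} then c else 0)"
    by (simp add: Q_def)
  also have "\<dots> = c" by (subst sum.delta) (auto simp: fT)
  finally show ?thesis .
qed

lemma Bk_sum:
  assumes "\<forall>j\<in>J. f j \<in> Bk k"
  shows "(\<lambda>H. \<Sum>j\<in>J. f j H) \<in> Bk k"
  using assms by (simp add: Bk_def)

lemma sum_in_C:
  assumes z: "(\<lambda>_ _. 0) \<in> C"
    and add: "\<forall>x\<in>C. \<forall>y\<in>C. (\<lambda>i H. x i H + y i H) \<in> C"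
    and fin: "finite J" and f: "\<forall>j\<in>J. f j \<in> C"
  shows "(\<lambda>i H. \<Sum>j\<in>J. f j i H) \<in> C"
  using fin f
proof (induction J rule: finite_induct)
  case empty
  then show ?case using z by simp
next
  case (insert j J)
  have c1: "(\<lambda>i H. \<Sum>j\<in>J. f j i H) \<in> C" using insert by simp
  have c2: "f j \<in> C" using insert by simp
  have "(\<lambda>i H. f j i H + (\<lambda>i H. \<Sum>j\<in>J. f j i H) i H) \<in> C"
    using add[rule_format, OF c2 c1] by simp
  then show ?case using insert by simp
qed

theorem lemma4p4:
  fixes C :: "(nat \<Rightarrow> nat set \<Rightarrow> 'a::{field,finite}) set"
    and p r k n :: nat and enum :: "nat \<Rightarrow> nat set"
  assumes "prime p" and "r \<ge> 1" and "card (UNIV :: 'a set) = p ^ r" and "k \<ge> 1"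
    and "bij_betw enum {1..2^k} (Pow {1..k})"
    and "C \<subseteq> Bvec k n"
  shows "B_linear_code k n C \<longleftrightarrow>
         (\<exists>Cs :: nat \<Rightarrow> (nat \<Rightarrow> 'a) set.
            (\<forall>j\<in>{1..2^k}. F_linear_code n (Cs j)) \<and> C = Psibar_inv k enum n Cs)"
proof -
  note bij = assms(5)
  have enumK: "enum j \<subseteq> {1..k}" if "j \<in> {1..2^k}" for j
    using bij that by (auto simp: bij_betw_def)
  have enumF: "finite (enum j)" if "j \<in> {1..2^k}" for j
    using enumK[OF that] finite_subset by blast
  define proj :: "(nat \<Rightarrow> nat set \<Rightarrow> 'a) \<Rightarrow> nat \<Rightarrow> nat \<Rightarrow> 'a" where
    "proj x j = (\<lambda>i. if i < n then Q (x i) (enum j) else 0)" for x j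
  have PB: "Psibar_inv k enum n Cs = {x \<in> Bvec k n. \<forall>j\<in>{1..2^k}. proj x j \<in> Cs j}" for Cs
    unfolding Psibar_inv_def proj_def Psi_eq by (rule refl)
  show ?thesis
  proof
    assume L: "B_linear_code k n C"
    then have z: "(\<lambda>_ _. 0) \<in> C"
      and add: "\<forall>x\<in>C. \<forall>y\<in>C. (\<lambda>i H. x i H + y i H) \<in> C"
      and sm: "\<forall>a\<in>Bk k. \<forall>x\<in>C. (\<lambda>i. if i < n then bmul k a (x i) else (\<lambda>_. 0)) \<in> C"
      by (auto simp: B_linear_code_def)
    define Cs where "Cs j = (\<lambda>x. proj x j) ` C" for j
    have "F_linear_code n (Cs j)" if j: "j \<in> {1..2^k}" for j
      unfolding F_linear_code_def
    proof (intro conjI ballI allI)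
      show "Cs j \<subseteq> Fvec n" by (auto simp: Cs_def Fvec_def proj_def)
      have "proj (\<lambda>_ _. 0) j = (\<lambda>_. 0)" unfolding proj_def by (rule ext) (simp add: Q_zero)
      then show "(\<lambda>_. 0) \<in> Cs j" using z unfolding Cs_def by (rule image_eqI[OF sym])
    next
      fix u v assume "u \<in> Cs j" "v \<in> Cs j"
      then obtain x y where x: "x \<in> C" "u = proj x j" and y: "y \<in> C" "v = proj y j"
        unfolding Cs_def by blast
      have "proj (\<lambda>i H. x i H + y i H) j = (\<lambda>i. u i + v i)"
        unfolding x(2) y(2) proj_def by (rule ext) (simp add: Q_add)
      moreover have "(\<lambda>i H. x i H + y i H) \<in> C" using add x(1) y(1) by blast
      ultimately show "(\<lambda>i. u i + v i) \<in> Cs j" unfolding Cs_def by (rule image_eqI[OF sym])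
    next
      fix c :: 'a and u assume "u \<in> Cs j"
      then obtain x where x: "x \<in> C" "u = proj x j" unfolding Cs_def by blast
      define a where "a = (\<lambda>H::nat set. if H = {} then c else 0)"
      have a: "a \<in> Bk k" unfolding a_def by (rule const_Bk)
      have "proj (\<lambda>i. if i < n then bmul k a (x i) else (\<lambda>_. 0)) j = (\<lambda>i. c * u i)"
      proof (rule ext)
        fix i
        show "proj (\<lambda>i. if i < n then bmul k a (x i) else (\<lambda>_. 0)) j i = c * u i"
        proof (cases "i < n")
          case True
          have "Q a (enum j) = c" unfolding a_def by (rule Q_const[OF enumF[OF j]])
          then show ?thesis using True x by (simp add: proj_def Q_mul[OF enumK[OF j]])
        next
          case False
          then show ?thesis using x by (simp add: proj_def)
        qed
      qed
      moreover have "(\<lambda>i. if i < n then bmul k a (x i) else (\<lambda>_. 0)) \<in> C" using sm a x(1) by blast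
      ultimately show "(\<lambda>i. c * u i) \<in> Cs j" unfolding Cs_def by (rule image_eqI[OF sym])
    qed
    moreover have "C = Psibar_inv k enum n Cs"
      unfolding PB
    proof
      show "C \<subseteq> {x \<in> Bvec k n. \<forall>j\<in>{1..2^k}. proj x j \<in> Cs j}"
        using assms(6) by (auto simp: Cs_def)
    next
      show "{x \<in> Bvec k n. \<forall>j\<in>{1..2^k}. proj x j \<in> Cs j} \<subseteq> C"
      proof
        fix x assume "x \<in> {x \<in> Bvec k n. \<forall>j\<in>{1..2^k}. proj x j \<in> Cs j}"
        then have xB: "x \<in> Bvec k n" and xp: "\<forall>j\<in>{1..2^k}. \<exists>y\<in>C. proj x j = proj y j"
          by (auto simp: Cs_def)
        then obtain c where c: "\<forall>j\<in>{1..2^k}. c j \<in> C \<and> proj x j = proj (c j) j"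
          by metis
        have "\<exists>e::nat set \<Rightarrow> 'a. e \<in> Bk k \<and> (\<forall>T\<subseteq>{1..k}. Q e T = (if T = enum j then 1 else 0))" for j
          using Q_surj[of k "\<lambda>T. if T = enum j then 1 else 0"] by blast
        then obtain e :: "nat \<Rightarrow> nat set \<Rightarrow> 'a" where e: "\<And>j. e j \<in> Bk k"
          "\<And>j T. T \<subseteq> {1..k} \<Longrightarrow> Q (e j) T = (if T = enum j then 1 else 0)"
          by metis
        define f where "f j = (\<lambda>i. if i < n then bmul k (e j) (c j i) else (\<lambda>_. 0))" for j
        have fC: "\<forall>j\<in>{1..2^k}. f j \<in> C" using sm e(1) c unfolding f_def by blast
        have yC: "(\<lambda>i H. \<Sum>j\<in>{1..2^k}. f j i H) \<in> C"
          by (rule sum_in_C[OF z add _ fC]) simp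
        have "x = (\<lambda>i H. \<Sum>j\<in>{1..2^k}. f j i H)"
        proof (rule ext)
          fix i
          show "x i = (\<lambda>H. \<Sum>j\<in>{1..2^k}. f j i H)"
          proof (cases "i < n")
            case False
            then show ?thesis using xB by (auto simp: Bvec_def f_def)
          next
            case True
            have xi: "x i \<in> Bk k" using xB True by (simp add: Bvec_def)
            show ?thesis
            proof (rule Q_inj[OF xi])
              show "(\<lambda>H. \<Sum>j\<in>{1..2^k}. f j i H) \<in> Bk k"
                by (rule Bk_sum) (simp add: f_def True bmul_Bk)
              show "\<forall>T\<subseteq>{1..k}. Q (x i) T = Q (\<lambda>H. \<Sum>j\<in>{1..2^k}. f j i H) T"
              proof (intro allI impI)
                fix T assume T: "T \<subseteq> {1..k}"
                then obtain j0 where j0: "j0 \<in> {1..2^k}" "enum j0 = T"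
                  using bij unfolding bij_betw_def by (metis Pow_iff imageE)
                have iff: "T = enum j \<longleftrightarrow> j = j0" if "j \<in> {1..2^k}" for j
                  using bij j0 that unfolding bij_betw_def inj_on_def by metis
                have "Q (\<lambda>H. \<Sum>j\<in>{1..2^k}. f j i H) T = (\<Sum>j\<in>{1..2^k}. Q (f j i) T)"
                  by (rule Q_sum)
                also have "\<dots> = (\<Sum>j\<in>{1..2^k}. if j = j0 then Q (c j0 i) T else 0)"
                  by (rule sum.cong[OF refl]) (auto simp: f_def True Q_mul[OF T] e(2)[OF T] iff)
                also have "\<dots> = Q (c j0 i) T" using j0 by simp
                also have "\<dots> = Q (x i) T"
                proof -
                  have "proj x j0 i = proj (c j0) j0 i" using c j0 by simp
                  then show ?thesis using True j0 by (simp add: proj_def)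
                qed
                finally show "Q (x i) T = Q (\<lambda>H. \<Sum>j\<in>{1..2^k}. f j i H) T" by simp
              qed
            qed
          qed
        qed
        then show "x \<in> C" using yC by simp
      qed
    qed
    ultimately show "\<exists>Cs :: nat \<Rightarrow> (nat \<Rightarrow> 'a) set.
            (\<forall>j\<in>{1..2^k}. F_linear_code n (Cs j)) \<and> C = Psibar_inv k enum n Cs"
      by blast
  next
    assume "\<exists>Cs :: nat \<Rightarrow> (nat \<Rightarrow> 'a) set.
            (\<forall>j\<in>{1..2^k}. F_linear_code n (Cs j)) \<and> C = Psibar_inv k enum n Cs"
    then obtain Cs :: "nat \<Rightarrow> (nat \<Rightarrow> 'a) set" where
      lin: "\<forall>j\<in>{1..2^k}. F_linear_code n (Cs j)" and CP: "C = Psibar_inv k enum n Cs"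
      by blast
    have CC: "C = {x \<in> Bvec k n. \<forall>j\<in>{1..2^k}. proj x j \<in> Cs j}" using CP PB by simp
    have zC: "(\<lambda>_. 0) \<in> Cs j" and addC: "\<forall>u\<in>Cs j. \<forall>v\<in>Cs j. (\<lambda>i. u i + v i) \<in> Cs j"
      and smC: "\<forall>c. \<forall>u\<in>Cs j. (\<lambda>i. c * u i) \<in> Cs j" if "j \<in> {1..2^k}" for j
      using lin that by (auto simp: F_linear_code_def)
    show "B_linear_code k n C"
      unfolding B_linear_code_def
    proof (intro conjI ballI)
      show "C \<subseteq> Bvec k n" by (rule assms(6))
      have "(\<lambda>_ _. 0) \<in> Bvec k n" by (simp add: Bvec_def Bk_def)
      moreover have "proj (\<lambda>_ _. 0) j = (\<lambda>_. 0)" for j unfolding proj_def by (rule ext) (simp add: Q_zero)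
      ultimately show "(\<lambda>_ _. 0) \<in> C" using zC CC by auto
    next
      fix x y assume x: "x \<in> C" and y: "y \<in> C"
      have "(\<lambda>i H. x i H + y i H) \<in> Bvec k n"
        using x y CC by (auto simp: Bvec_def Bk_def)
      moreover have "proj (\<lambda>i H. x i H + y i H) j = (\<lambda>i. proj x j i + proj y j i)" for j
        by (auto simp: proj_def Q_add)
      ultimately show "(\<lambda>i H. x i H + y i H) \<in> C" using x y CC addC by auto
    next
      fix a :: "nat set \<Rightarrow> 'a" and x assume a: "a \<in> Bk k" and x: "x \<in> C"
      have "(\<lambda>i. if i < n then bmul k a (x i) else (\<lambda>_. 0)) \<in> Bvec k n"
        by (auto simp: Bvec_def bmul_Bk)
      moreover have "proj (\<lambda>i. if i < n then bmul k a (x i) else (\<lambda>_. 0)) j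
          = (\<lambda>i. Q a (enum j) * proj x j i)" if "j \<in> {1..2^k}" for j
        by (auto simp: proj_def Q_mul[OF enumK[OF that]] Q_zero)
      ultimately show "(\<lambda>i. if i < n then bmul k a (x i) else (\<lambda>_. 0)) \<in> C"
        using x CC smC by auto
    qed
  qed
qed

end
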